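(* Suppose $\mathit{Act}$ is finite and $|\mathit{Act}|\ge2$. Then verdict equivalence $\simeq$ has no finite equational basis over open monitors: there is no finite set $\mathcal{E}$ of equations between monitors that is sound for $\simeq$ (i.e. $\mathcal{E}\vdash m=n$ implies $m\simeq n$) and complete for $\simeq$ (i.e. $m\simeq n$ implies $\mathcal{E}\vdash m=n$, for all monitors $m,n$ possibly containing variables).
   Context: Monitors: terms $m,n ::= v \mid a.m \mid m+n \mid x$ with $a\in\mathit{Act}$, $x$ ranging over a countably infinite set of variables, and verdicts $v::=\mathit{end}\mid\mathit{yes}\mid\mathit{no}$. Semantics: $\xrightarrow{\alpha}$ ($\alpha\in\mathit{Act}\cup\{\tau\}$, $\tau\notin\mathit{Act}$) is the least relation with $a.m\xrightarrow{a}m$; $m\xrightarrow{\alpha}m'$ implies $m+n\xrightarrow{\alpha}m'$ and $n+m\xrightarrow{\alpha}m'$; $v\xrightarrow{\alpha}v$ for verdicts $v$. Weak transitions: $m\xRightarrow{\varepsilon}m'$ iff $m(\xrightarrow{\tau})^*m'$; $m\xRightarrow{a}m'$ iff $m\xRightarrow{\varepsilon}\xrightarrow{a}\xRightarrow{\varepsilon}m'$; $m\xRightarrow{as'}m'$ ($s'\ne\varepsilon$) iff $m\xRightarrow{a}m_1\xRightarrow{s'}m'$. For closed (variable-free) $m$, $L_a(m)=\{s\in\mathit{Act}^*\mid m\xRightarrow{s}\mathit{yes}\}$, $L_r(m)=\{s\in\mathit{Act}^*\mid m\xRightarrow{s}\mathit{no}\}$; $m\simeq n$ iff $L_a(m)=L_a(n)$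 and $L_r(m)=L_r(n)$ for closed terms, and for open terms iff $\sigma(m)\simeq\sigma(n)$ for every substitution $\sigma$ mapping variables to closed monitors. $\mathcal{E}\vdash m=n$ denotes derivability from $\mathcal{E}$ by reflexivity, symmetry, transitivity, substitution (from $t=t'$ infer $\sigma(t)=\sigma(t')$) and congruence for $a.\_$ and $+$. *)

theory Defs
  imports Main
begin

datatype verdict = End | Yes | No

datatype 'a mon = Verd verdict | Pre 'a "'a mon" | Plus "'a mon" "'a mon" | Var nat

text \<open>Labels: Some a for an action a, None for the silent action tau.\<close>

inductive step :: "'a mon \<Rightarrow> 'a option \<Rightarrow> 'a mon \<Rightarrow> bool" where
  act:   "step (Pre a m) (Some a) m"
| sumL:  "step m \<alpha> m' \<Longrightarrow> step (Plus m n) \<alpha> m'"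
| sumR:  "step m \<alpha> m' \<Longrightarrow> step (Plus n m) \<alpha> m'"
| verd:  "step (Verd v) \<alpha> (Verd v)"

definition taus :: "'a mon \<Rightarrow> 'a mon \<Rightarrow> bool" where
  "taus = (\<lambda>m m'. step m None m')\<^sup>*\<^sup>*"

primrec weak :: "'a mon \<Rightarrow> 'a list \<Rightarrow> 'a mon \<Rightarrow> bool" where
  "weak m [] m' = taus m m'"
| "weak m (a # s) m' = (\<exists>m1 m2. taus m m1 \<and> step m1 (Some a) m2 \<and> weak m2 s m')"

primrec vars :: "'a mon \<Rightarrow> nat set" where
  "vars (Verd v) = {}"
| "vars (Pre a m) = vars m"
| "vars (Plus m n) = vars m \<union> vars n"
| "vars (Var x) = {x}"

definition closed :: "'a mon \<Rightarrow> bool" where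
  "closed m \<longleftrightarrow> vars m = {}"

primrec subst :: "(nat \<Rightarrow> 'a mon) \<Rightarrow> 'a mon \<Rightarrow> 'a mon" where
  "subst \<sigma> (Verd v) = Verd v"
| "subst \<sigma> (Pre a m) = Pre a (subst \<sigma> m)"
| "subst \<sigma> (Plus m n) = Plus (subst \<sigma> m) (subst \<sigma> n)"
| "subst \<sigma> (Var x) = \<sigma> x"

definition La :: "'a mon \<Rightarrow> 'a list set" where
  "La m = {s. weak m s (Verd Yes)}"

definition Lr :: "'a mon \<Rightarrow> 'a list set" where
  "Lr m = {s. weak m s (Verd No)}"

definition closed_equiv :: "'a mon \<Rightarrow> 'a mon \<Rightarrow> bool" where
  "closed_equiv m n \<longleftrightarrow> La m = La n \<and> Lr m = Lr n"

text \<open>Verdict equivalence on (possibly open) monitors: closed under all closed substitutions.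
For closed terms this coincides with closed_equiv since substitution leaves them unchanged.\<close>
definition verdict_equiv :: "'a mon \<Rightarrow> 'a mon \<Rightarrow> bool" where
  "verdict_equiv m n \<longleftrightarrow>
     (\<forall>\<sigma>. (\<forall>x. closed (\<sigma> x)) \<longrightarrow> closed_equiv (subst \<sigma> m) (subst \<sigma> n))"

inductive derivable :: "('a mon \<times> 'a mon) set \<Rightarrow> 'a mon \<Rightarrow> 'a mon \<Rightarrow> bool"
  for E :: "('a mon \<times> 'a mon) set" where
  ax:    "(m, n) \<in> E \<Longrightarrow> derivable E m n"
| refl:  "derivable E m m"
| sym:   "derivable E m n \<Longrightarrow> derivable E n m"
| trans: "derivable E m n \<Longrightarrow> derivable E n p \<Longrightarrow> derivable E m p"
| inst:  "derivable E m n \<Longrightarrow> derivable E (subst \<sigma> m) (subst \<sigma> n)"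
| cpre:  "derivable E m n \<Longrightarrow> derivable E (Pre a m) (Pre a n)"
| cplus: "derivable E m n \<Longrightarrow> derivable E m' n' \<Longrightarrow> derivable E (Plus m m') (Plus n n')"

end

theory Submission imports Defs begin

definition vv :: "bool \<Rightarrow> verdict" where "vv b = (if b then Yes else No)"

primrec lang :: "bool \<Rightarrow> (nat \<Rightarrow> bool \<Rightarrow> 'a list set) \<Rightarrow> 'a mon \<Rightarrow> 'a list set" where
  "lang b \<rho> (Verd v) = (if v = vv b then UNIV else {})"
| "lang b \<rho> (Pre a m) = (\<lambda>s. a # s) ` lang b \<rho> m"
| "lang b \<rho> (Plus m n) = lang b \<rho> m \<union> lang b \<rho> n"
| "lang b \<rho> (Var x) = \<rho> x b"

primrec topv :: "'a mon \<Rightarrow> verdict \<Rightarrow> bool" where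
  "topv (Verd v) V = (v = V)"
| "topv (Pre a m) V = False"
| "topv (Plus m n) V = (topv m V \<or> topv n V)"
| "topv (Var x) V = False"

primrec pd :: "'a mon \<Rightarrow> 'a \<Rightarrow> 'a mon \<Rightarrow> bool" where
  "pd (Verd v) c m' = False"
| "pd (Pre a m) c m' = (a = c \<and> m' = m)"
| "pd (Plus m n) c m' = (pd m c m' \<or> pd n c m')"
| "pd (Var x) c m' = False"

lemma step_char: "step m \<alpha> m' \<longleftrightarrow> (\<exists>v. topv m v \<and> m' = Verd v) \<or> (\<exists>a. \<alpha> = Some a \<and> pd m a m')"
proof
  assume "step m \<alpha> m'" then show "(\<exists>v. topv m v \<and> m' = Verd v) \<or> (\<exists>a. \<alpha> = Some a \<and> pd m a m')"
    by induction auto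
next
  show "(\<exists>v. topv m v \<and> m' = Verd v) \<or> (\<exists>a. \<alpha> = Some a \<and> pd m a m') \<Longrightarrow> step m \<alpha> m'"
    by (induction m) (auto intro: step.intros)
qed

lemma taus_char: "taus m m' \<longleftrightarrow> m' = m \<or> (\<exists>v. topv m v \<and> m' = Verd v)"
proof
  assume "taus m m'" then show "m' = m \<or> (\<exists>v. topv m v \<and> m' = Verd v)"
    unfolding taus_def
  proof induction
    case base then show ?case by simp
  next
    case (step y z) then show ?case by (auto simp: step_char)
  qed
next
  assume "m' = m \<or> (\<exists>v. topv m v \<and> m' = Verd v)"
  then show "taus m m'" unfolding taus_def
    by (auto intro: r_into_rtranclp simp: step_char)
qed


lemma lang0_nil: "[] \<in> lang b (\<lambda>_ _. {}) m \<longleftrightarrow> topv m (vv b)"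
  by (induction m) auto

lemma lang0_cons: "c # s \<in> lang b (\<lambda>_ _. {}) m \<longleftrightarrow> topv m (vv b) \<or> (\<exists>m2. pd m c m2 \<and> s \<in> lang b (\<lambda>_ _. {}) m2)"
  by (induction m) auto

lemma weak_lang: "weak m s (Verd (vv b)) \<longleftrightarrow> s \<in> lang b (\<lambda>_ _. {}) m"
proof (induction s arbitrary: m)
  case Nil then show ?case by (auto simp: taus_char lang0_nil)
next
  case (Cons c s)
  show ?case
  proof
    assume "weak m (c # s) (Verd (vv b))"
    then obtain m1 m2 where t: "taus m m1" and st: "step m1 (Some c) m2" and w: "weak m2 s (Verd (vv b))" by auto
    from w Cons have w': "s \<in> lang b (\<lambda>_ _. {}) m2" by simp
    from t show "c # s \<in> lang b (\<lambda>_ _. {}) m"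
      unfolding taus_char
    proof
      assume "m1 = m"
      with st w' show ?thesis by (auto simp: step_char lang0_cons split: if_splits)
    next
      assume "\<exists>v. topv m v \<and> m1 = Verd v"
      with st w' show ?thesis by (auto simp: step_char lang0_cons split: if_splits)
    qed
  next
    assume "c # s \<in> lang b (\<lambda>_ _. {}) m"
    then consider "topv m (vv b)" | m2 where "pd m c m2" "s \<in> lang b (\<lambda>_ _. {}) m2"
      by (auto simp: lang0_cons)
    then show "weak m (c # s) (Verd (vv b))"
    proof cases
      case 1
      have "weak (Verd (vv b)) s (Verd (vv b))" using Cons by simp
      then show ?thesis using 1 by (auto simp: taus_char step_char intro!: exI[of _ "Verd (vv b)"])
    next
      case 2
      have "taus m m" by (simp add: taus_char)
      moreover have "step m (Some c) m2" using 2 by (simp add: step_char)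
      moreover have "weak m2 s (Verd (vv b))" using 2 Cons by simp
      ultimately show ?thesis by auto
    qed
  qed
qed


lemma La_lang: "La m = lang True (\<lambda>_ _. {}) m"
  unfolding La_def using weak_lang[of m _ True] by (auto simp: vv_def)
lemma Lr_lang: "Lr m = lang False (\<lambda>_ _. {}) m"
  unfolding Lr_def using weak_lang[of m _ False] by (auto simp: vv_def)

lemma lang_subst: "lang b \<rho> (subst \<sigma> m) = lang b (\<lambda>x b. lang b \<rho> (\<sigma> x)) m"
  by (induction m) auto

lemma lang_mono: "(\<And>x b. \<rho> x b \<subseteq> \<rho>' x b) \<Longrightarrow> lang b \<rho> m \<subseteq> lang b \<rho>' m"
  by (induction m) auto

lemma lang_bothb: "(\<forall>b. lang b \<rho> m = lang b \<rho> n) \<longleftrightarrow> lang True \<rho> m = lang True \<rho> n \<and> lang False \<rho> m = lang False \<rho> n"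
  by (rule all_bool_eq)

lemma verdict_equiv_lang: "verdict_equiv m n \<longleftrightarrow>
  (\<forall>\<sigma>. (\<forall>x. closed (\<sigma> x)) \<longrightarrow> (\<forall>b. lang b (\<lambda>x b. lang b (\<lambda>_ _. {}) (\<sigma> x)) m = lang b (\<lambda>x b. lang b (\<lambda>_ _. {}) (\<sigma> x)) n))"
  unfolding verdict_equiv_def closed_equiv_def La_lang Lr_lang lang_subst lang_bothb ..

primrec vocc :: "'a mon \<Rightarrow> verdict \<Rightarrow> 'a list \<Rightarrow> bool" where
  "vocc (Verd v) V w = (v = V \<and> w = [])"
| "vocc (Pre a m) V w = (\<exists>w'. w = a # w' \<and> vocc m V w')"
| "vocc (Plus m n) V w = (vocc m V w \<or> vocc n V w)"
| "vocc (Var x) V w = False"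

primrec xocc :: "'a mon \<Rightarrow> nat \<Rightarrow> 'a list \<Rightarrow> bool" where
  "xocc (Verd v) y w = False"
| "xocc (Pre a m) y w = (\<exists>w'. w = a # w' \<and> xocc m y w')"
| "xocc (Plus m n) y w = (xocc m y w \<or> xocc n y w)"
| "xocc (Var x) y w = (x = y \<and> w = [])"

primrec dep :: "'a mon \<Rightarrow> nat" where
  "dep (Verd v) = 0"
| "dep (Pre a m) = Suc (dep m)"
| "dep (Plus m n) = max (dep m) (dep n)"
| "dep (Var x) = 0"

lemma vocc_dep: "vocc t V w \<Longrightarrow> length w \<le> dep t"
  by (induction t arbitrary: w) (auto simp: le_max_iff_disj)
lemma xocc_dep: "xocc t x w \<Longrightarrow> length w \<le> dep t"
  by (induction t arbitrary: w) (auto simp: le_max_iff_disj)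

lemma lang_char: "s \<in> lang b \<rho> t \<longleftrightarrow>
   (\<exists>w r. vocc t (vv b) w \<and> s = w @ r) \<or> (\<exists>w x f. xocc t x w \<and> f \<in> \<rho> x b \<and> s = w @ f)"
proof (induction t arbitrary: s)
  case (Pre a m)
  have "s \<in> lang b \<rho> (Pre a m) \<longleftrightarrow> (\<exists>s'. s = a # s' \<and> s' \<in> lang b \<rho> m)" by auto
  also have "\<dots> \<longleftrightarrow> (\<exists>s'. s = a # s' \<and> ((\<exists>w r. vocc m (vv b) w \<and> s' = w @ r) \<or> (\<exists>w x f. xocc m x w \<and> f \<in> \<rho> x b \<and> s' = w @ f)))"
    by (simp only: Pre.IH)
  also have "\<dots> \<longleftrightarrow> (\<exists>w r. vocc (Pre a m) (vv b) w \<and> s = w @ r) \<or> (\<exists>w x f. xocc (Pre a m) x w \<and> f \<in> \<rho> x b \<and> s = w @ f)"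
  proof
    assume "\<exists>s'. s = a # s' \<and> ((\<exists>w r. vocc m (vv b) w \<and> s' = w @ r) \<or> (\<exists>w x f. xocc m x w \<and> f \<in> \<rho> x b \<and> s' = w @ f))"
    then obtain s' where "s = a # s'" and "(\<exists>w r. vocc m (vv b) w \<and> s' = w @ r) \<or> (\<exists>w x f. xocc m x w \<and> f \<in> \<rho> x b \<and> s' = w @ f)" by blast
    then show "(\<exists>w r. vocc (Pre a m) (vv b) w \<and> s = w @ r) \<or> (\<exists>w x f. xocc (Pre a m) x w \<and> f \<in> \<rho> x b \<and> s = w @ f)"
    proof (elim disjE exE conjE)
      fix w r assume "s = a # s'" "vocc m (vv b) w" "s' = w @ r"
      then have "vocc (Pre a m) (vv b) (a # w) \<and> s = (a # w) @ r" by simp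
      then show ?thesis by blast
    next
      fix w x f assume "s = a # s'" "xocc m x w" "f \<in> \<rho> x b" "s' = w @ f"
      then have "xocc (Pre a m) x (a # w) \<and> f \<in> \<rho> x b \<and> s = (a # w) @ f" by simp
      then show ?thesis by blast
    qed
  next
    assume "(\<exists>w r. vocc (Pre a m) (vv b) w \<and> s = w @ r) \<or> (\<exists>w x f. xocc (Pre a m) x w \<and> f \<in> \<rho> x b \<and> s = w @ f)"
    then show "\<exists>s'. s = a # s' \<and> ((\<exists>w r. vocc m (vv b) w \<and> s' = w @ r) \<or> (\<exists>w x f. xocc m x w \<and> f \<in> \<rho> x b \<and> s' = w @ f))"
    proof (elim disjE exE conjE)
      fix w r assume "vocc (Pre a m) (vv b) w" "s = w @ r"
      then obtain w' where "w = a # w'" "vocc m (vv b) w'" by auto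
      then show ?thesis using \<open>s = w @ r\<close> by auto
    next
      fix w x f assume "xocc (Pre a m) x w" "f \<in> \<rho> x b" "s = w @ f"
      then obtain w' where "w = a # w'" "xocc m x w'" by auto
      then show ?thesis using \<open>s = w @ f\<close> \<open>f \<in> \<rho> x b\<close> by auto
    qed
  qed
  finally show ?case .
next
  case (Verd v) show ?case by (cases "v = vv b") auto
next
  case (Plus m n) have "s \<in> lang b \<rho> (Plus m n) \<longleftrightarrow> s \<in> lang b \<rho> m \<or> s \<in> lang b \<rho> n" by simp
  also have "\<dots> \<longleftrightarrow> (\<exists>w r. vocc (Plus m n) (vv b) w \<and> s = w @ r) \<or> (\<exists>w x f. xocc (Plus m n) x w \<and> f \<in> \<rho> x b \<and> s = w @ f)" unfolding Plus.IH vocc.simps xocc.simps by blast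
  finally show ?case .
next
  case (Var y) show ?case by auto
qed

definition inD :: "nat \<Rightarrow> 'a list set \<Rightarrow> bool" where
  "inD d A \<longleftrightarrow> (\<forall>s\<in>A. length s < d \<longrightarrow> (\<forall>r. s @ r \<in> A))"

definition validr :: "nat \<Rightarrow> (nat \<Rightarrow> bool \<Rightarrow> 'a list set) \<Rightarrow> bool" where
  "validr d \<rho> \<longleftrightarrow> (\<forall>x b. inD d (\<rho> x b))"

lemma inD_lang: "validr d \<rho> \<Longrightarrow> inD d (lang b \<rho> m)"
proof (induction m)
  case (Pre a m)
  show ?case unfolding inD_def
  proof (intro ballI impI allI)
    fix s r assume "s \<in> lang b \<rho> (Pre a m)" "length s < d"
    then obtain s' where s': "s = a # s'" "s' \<in> lang b \<rho> m" by auto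
    with \<open>length s < d\<close> have "length s' < d" by simp
    with s' Pre have "s' @ r \<in> lang b \<rho> m" unfolding inD_def by blast
    then show "s @ r \<in> lang b \<rho> (Pre a m)" using s' by simp
  qed
next
  case (Verd v) then show ?case by (simp add: inD_def)
next
  case (Plus m n) then show ?case by (auto simp: inD_def)
next
  case (Var x) then show ?case by (simp add: validr_def)
qed

definition mvalid :: "nat \<Rightarrow> 'a mon \<Rightarrow> 'a mon \<Rightarrow> bool" where
  "mvalid d m n \<longleftrightarrow> (\<forall>\<rho>. validr d \<rho> \<longrightarrow> (\<forall>b. lang b \<rho> m = lang b \<rho> n))"

lemma ext_closed: "s \<in> lang b (\<lambda>_ _. {}) m \<Longrightarrow> s @ r \<in> lang b (\<lambda>_ _. {}) m"
  by (induction m arbitrary: s) (auto split: if_splits)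

lemma lang_chain: "lang b \<rho> (foldr Pre z m) = (\<lambda>r. z @ r) ` lang b \<rho> m"
  by (induction z) (auto simp: image_image)

lemma closed_chain: "closed (foldr Pre z (Verd v))"
  unfolding closed_def by (induction z) auto


lemma period:
  assumes pz: "p @ z = z @ r" and z: "z = f @ replicate d a1 @ [a2]"
    and p0: "0 < length p" and pd: "length p \<le> d" and neq: "a1 \<noteq> a2"
  shows False
proof -
  define n where "n = length f + d"
  have lz: "length z = Suc n" using z n_def by simp
  have "(p @ z) ! (length p + (n - length p)) = z ! (n - length p)"
    by (simp add: nth_append)
  moreover have "length p + (n - length p) = n" using pd n_def by simp
  ultimately have 1: "(p @ z) ! n = z ! (n - length p)" by simp
  have eqi: "n - length p = length f + (d - length p)" using pd n_def by simp
  have zi: "z ! (n - length p) = (replicate d a1 @ [a2]) ! (d - length p)"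
    unfolding eqi z by (simp only: nth_append_length_plus)
  have "d - length p < d" using p0 pd by linarith
  then have "(replicate d a1 @ [a2]) ! (d - length p) = a1" by (simp add: nth_append)
  with 1 zi have 2: "(p @ z) ! n = a1" by simp
  have "(z @ r) ! n = z ! n" using lz by (simp add: nth_append)
  also have "\<dots> = a2" using z n_def by (simp add: nth_append)
  finally show False using 2 pz neq by simp
qed

lemma vv_eq: "vv b = vv b' \<longleftrightarrow> b = b'"
  by (auto simp: vv_def split: if_splits)

lemma key:
  fixes t u :: "'a mon" and a1 a2 :: 'a
  assumes ve: "verdict_equiv t u" and dt: "dep t < d" and du: "dep u < d"
    and vr: "validr d \<rho>" and neq: "a1 \<noteq> a2"
  shows "lang b \<rho> t \<subseteq> lang b \<rho> u"
proof
  let ?r0 = "\<lambda>(_::nat) (_::bool). {} :: 'a list set"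
  have E: "\<And>\<sigma>. (\<forall>x. closed (\<sigma> x)) \<Longrightarrow> lang b (\<lambda>x b. lang b ?r0 (\<sigma> x)) t = lang b (\<lambda>x b. lang b ?r0 (\<sigma> x)) u"
    using ve unfolding verdict_equiv_lang by blast
  fix s assume s: "s \<in> lang b \<rho> t"
  then consider (V) w r where "vocc t (vv b) w" "s = w @ r"
    | (X) w x f where "xocc t x w" "f \<in> \<rho> x b" "s = w @ f"
    unfolding lang_char by blast
  then show "s \<in> lang b \<rho> u"
  proof cases
    case V
    have cE: "\<forall>x. closed ((\<lambda>_. Verd End :: 'a mon) x)" by (simp add: closed_def)
    have "(\<lambda>x b. lang b ?r0 ((\<lambda>_. Verd End :: 'a mon) x)) = ?r0"
      by (auto simp: vv_def fun_eq_iff split: if_splits)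
    with E[OF cE] have EE: "lang b ?r0 t = lang b ?r0 u" by simp
    have "s \<in> lang b ?r0 t" using V unfolding lang_char by blast
    with EE have "s \<in> lang b ?r0 u" by simp
    then show ?thesis using lang_mono[of ?r0 \<rho> b u] by blast
  next
    case X
    define g where "g = (if length f < d then f else f @ replicate d a1 @ [a2])"
    define \<sigma> :: "nat \<Rightarrow> 'a mon" where "\<sigma> = (\<lambda>y. if y = x then foldr Pre g (Verd (vv b)) else Verd End)"
    have c\<sigma>: "\<forall>y. closed (\<sigma> y)" using closed_chain[of g "vv b"] by (simp add: \<sigma>_def closed_def)
    define \<rho>T where "\<rho>T = (\<lambda>y b. lang b ?r0 (\<sigma> y))"
    have \<rho>T: "h \<in> \<rho>T y b \<longleftrightarrow> y = x \<and> (\<exists>r. h = g @ r)" for h y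
      by (auto simp: \<rho>T_def \<sigma>_def lang_chain vv_eq) (auto simp: vv_def split: if_splits)
    have "w @ g \<in> lang b \<rho>T t" unfolding lang_char using X \<rho>T by blast
    with E[OF c\<sigma>] have "w @ g \<in> lang b \<rho>T u" unfolding \<rho>T_def by simp
    then consider (V2) w' r where "vocc u (vv b) w'" "w @ g = w' @ r"
      | (X2) w' y h where "xocc u y w'" "h \<in> \<rho>T y b" "w @ g = w' @ h"
      unfolding lang_char by blast
    then show ?thesis
    proof cases
      case V2
      have lw': "length w' < d" using vocc_dep[OF V2(1)] du by simp
      have "\<exists>r'. w @ f = w' @ r'"
      proof (cases "length f < d")
        case True then show ?thesis using V2 g_def by simp
      next
        case False
        then have e1: "(w @ f) @ (replicate d a1 @ [a2]) = w' @ r" using V2 g_def by simp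
        have le: "length w' \<le> length (w @ f)" using lw' False by simp
        have "take (length w') ((w @ f) @ (replicate d a1 @ [a2])) = w'" unfolding e1 by simp
        then have "take (length w') (w @ f) = w'" using le by simp
        then have "w @ f = w' @ drop (length w') (w @ f)" by (metis append_take_drop_id)
        then show ?thesis by blast
      qed
      then obtain r' where "w @ f = w' @ r'" by blast
      then show ?thesis using V2(1) X(3) unfolding lang_char by blast
    next
      case X2
      from X2(2) \<rho>T obtain r where yx: "y = x" and h: "h = g @ r" by blast
      have lw': "length w' < d" using xocc_dep[OF X2(1)] du by simp
      have lw: "length w < d" using xocc_dep[OF X(1)] dt by simp
      show ?thesis
      proof (cases "length f < d")
        case True
        then have "w @ f = w' @ (f @ r)" using X2(3) h g_def by simp
        moreover have "f @ r \<in> \<rho> x b" using vr X(2) True unfolding validr_def inD_def by blast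
        ultimately show ?thesis using X2(1) yx X(3) unfolding lang_char by blast
      next
        case False
        have eq: "w @ g = w' @ g @ r" using X2(3) h by simp
        then have "length (w @ g) = length (w' @ g @ r)" by simp
        then have len: "length w = length w' + length r" by simp
        show ?thesis
        proof (cases "r = []")
          case True
          then have "w = w'" using eq by simp
          then show ?thesis using X2(1) yx X unfolding lang_char by blast
        next
          case False
          define p where "p = drop (length w') w"
          have ww: "w = w' @ p"
          proof -
            have "take (length w') (w @ g) = take (length w') (w' @ g @ r)" using eq by simp
            then have "take (length w') w = w'" using len by simp
            then show ?thesis unfolding p_def by (metis append_take_drop_id)
          qed
          have "p @ g = g @ r" using eq ww by simp
          moreover have "length p = length r" using ww len by simp
          moreover have "g = f @ replicate d a1 @ [a2]" using g_def \<open>\<not> length f < d\<close> by simp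
          ultimately show ?thesis using period[of p g r f d a1 a2] False lw neq ww
            by (simp add: less_imp_le)
        qed
      qed
    qed
  qed
qed


definition acts :: "'a::finite list" where "acts = (SOME xs. set xs = UNIV)"

lemma set_acts: "set (acts :: 'a::finite list) = UNIV"
proof -
  obtain xs :: "'a list" where "set xs = UNIV" using finite_list[OF finite_UNIV] by blast
  then show ?thesis unfolding acts_def by (rule someI)
qed

fun msum :: "'a mon list \<Rightarrow> 'a mon" where
  "msum [] = Verd End"
| "msum (m # ms) = Plus m (msum ms)"

lemma lang_msum: "lang b \<rho> (msum ms) = (\<Union>m\<in>set ms. lang b \<rho> m)"
  by (induction ms) (auto simp: vv_def)

definition full :: "'a mon" where "full = Plus (Verd Yes) (Verd No)"

primrec Cov :: "'a::finite \<Rightarrow> nat \<Rightarrow> 'a mon" where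
  "Cov a 0 = full"
| "Cov a (Suc j) = msum (map (\<lambda>c. Pre c (if c = a then Cov a j else full)) acts)"

lemma lang_full: "lang b \<rho> full = UNIV"
  by (cases b) (simp_all add: vv_def full_def)
lemma lang_Cov0: "lang b \<rho> (Cov a 0) = UNIV"
  by (simp add: lang_full)

lemma cons_replicate: "c # s = replicate i a \<longleftrightarrow> (\<exists>i'. i = Suc i' \<and> c = a \<and> s = replicate i' a)"
  by (cases i) auto

lemma lang_Cov: "lang b \<rho> (Cov a j) = {s. \<forall>i<j. s \<noteq> replicate i a}"
proof (induction j)
  case 0 then show ?case by (simp add: lang_full)
next
  case (Suc j)
  show ?case
  proof (rule set_eqI)
    fix s :: "'a list"
    show "s \<in> lang b \<rho> (Cov a (Suc j)) \<longleftrightarrow> s \<in> {s. \<forall>i<Suc j. s \<noteq> replicate i a}"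
    proof (cases s)
      case Nil
      have "[] \<notin> lang b \<rho> (Cov a (Suc j))" by (auto simp: lang_msum)
      moreover have "\<not> (\<forall>i<Suc j. [] \<noteq> replicate i a)" by (metis replicate_0 zero_less_Suc)
      ultimately show ?thesis using Nil by simp
    next
      case (Cons c s')
      have "s \<in> lang b \<rho> (Cov a (Suc j)) \<longleftrightarrow> s' \<in> lang b \<rho> (if c = a then Cov a j else full)"
        using Cons by (auto simp: lang_msum set_acts)
      also have "\<dots> \<longleftrightarrow> (c = a \<longrightarrow> (\<forall>i<j. s' \<noteq> replicate i a))"
        using Suc by (simp add: lang_full)
      also have "\<dots> \<longleftrightarrow> (\<forall>i<Suc j. s \<noteq> replicate i a)"
        unfolding Cons cons_replicate by auto
      finally show ?thesis by simp
    qed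
  qed
qed

lemma ve_sym: "verdict_equiv m n \<Longrightarrow> verdict_equiv n m"
  unfolding verdict_equiv_def closed_equiv_def by metis

lemma deriv_mvalid:
  fixes E :: "('a mon \<times> 'a mon) set" and a1 a2 :: 'a
  assumes "derivable E m n"
    and sound: "\<forall>m n. derivable E m n \<longrightarrow> verdict_equiv m n"
    and depE: "\<And>m n. (m, n) \<in> E \<Longrightarrow> dep m < d \<and> dep n < d"
    and neq: "(a1::'a) \<noteq> a2"
  shows "mvalid d m n"
  using assms(1)
proof induction
  case (ax m n)
  have ve: "verdict_equiv m n" using sound derivable.ax[OF ax] by blast
  show ?case unfolding mvalid_def
  proof (intro allI impI)
    fix \<rho> :: "nat \<Rightarrow> bool \<Rightarrow> 'a list set" and b assume vr: "validr d \<rho>"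
    show "lang b \<rho> m = lang b \<rho> n"
      using key[OF ve _ _ vr neq] key[OF ve_sym[OF ve] _ _ vr neq] depE[OF ax] by blast
  qed
next
  case (inst m n \<sigma>)
  show ?case unfolding mvalid_def
  proof (intro allI impI)
    fix \<rho> :: "nat \<Rightarrow> bool \<Rightarrow> 'a list set" and b assume vr: "validr d \<rho>"
    have "validr d (\<lambda>x b. lang b \<rho> (\<sigma> x))" using inD_lang[OF vr] by (simp add: validr_def)
    then show "lang b \<rho> (subst \<sigma> m) = lang b \<rho> (subst \<sigma> n)"
      using inst.IH unfolding mvalid_def lang_subst by blast
  qed
qed (auto simp: mvalid_def)


theorem mainTheorem20:
  assumes "card (UNIV :: 'a::finite set) \<ge> 2"
  shows "\<not> (\<exists>E :: ('a mon \<times> 'a mon) set. finite E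
             \<and> (\<forall>m n. derivable E m n \<longrightarrow> verdict_equiv m n)
             \<and> (\<forall>m n. verdict_equiv m n \<longrightarrow> derivable E m n))"
proof
  assume "\<exists>E :: ('a mon \<times> 'a mon) set. finite E
             \<and> (\<forall>m n. derivable E m n \<longrightarrow> verdict_equiv m n)
             \<and> (\<forall>m n. verdict_equiv m n \<longrightarrow> derivable E m n)"
  then obtain E :: "('a mon \<times> 'a mon) set" where fin: "finite E"
    and sound: "\<forall>m n. derivable E m n \<longrightarrow> verdict_equiv m n"
    and compl: "\<forall>m n. verdict_equiv m n \<longrightarrow> derivable E m n" by blast
  obtain a1 a2 :: 'a where neq: "a1 \<noteq> a2"
  proof -
    obtain a1 :: 'a where True by simp
    show ?thesis
    proof (cases "\<exists>a2. a2 \<noteq> a1")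
      case True then show ?thesis using that by blast
    next
      case False
      then have "(UNIV :: 'a set) = {a1}" by blast
      then have "card (UNIV :: 'a set) = card {a1}" by (rule arg_cong)
      then have "card (UNIV :: 'a set) = 1" by simp
      then show ?thesis using assms by simp
    qed
  qed
  define D where "D = Max (insert 0 ((\<lambda>(m, n). max (dep m) (dep n)) ` E))"
  define d where "d = Suc D"
  have depE: "dep m < d \<and> dep n < d" if "(m, n) \<in> E" for m n
  proof -
    have "max (dep m) (dep n) \<le> D" unfolding D_def
      using fin that by (intro Max_ge) force+
    then show ?thesis unfolding d_def by simp
  qed
  define lhs :: "'a mon" where "lhs = Plus (Var 0) (Plus (Pre a1 (Var 0)) (Cov a1 (Suc (Suc d))))"
  define rhs :: "'a mon" where "rhs = Plus (Var 0) (Cov a1 (Suc (Suc d)))"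
  have ve: "verdict_equiv lhs rhs"
    unfolding verdict_equiv_lang
  proof (intro allI impI)
    fix \<sigma> :: "nat \<Rightarrow> 'a mon" and b
    define A where "A = lang b (\<lambda>_ _. {}) (\<sigma> 0)"
    have sub: "(\<lambda>s. a1 # s) ` A \<subseteq> A \<union> lang b (\<lambda>_ _. {}) (Cov a1 (Suc (Suc d)))"
    proof
      fix s' assume "s' \<in> (\<lambda>s. a1 # s) ` A"
      then obtain s where s: "s \<in> A" "s' = a1 # s" by blast
      show "s' \<in> A \<union> lang b (\<lambda>_ _. {}) (Cov a1 (Suc (Suc d)))"
      proof (cases "\<exists>i<Suc (Suc d). s' = replicate i a1")
        case True
        then obtain i where "s' = replicate i a1" by blast
        with s obtain i' where "s = replicate i' a1" "s' = replicate (Suc i') a1"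
          using cons_replicate by metis
        then have "s' = s @ [a1]" by (simp add: replicate_append_same)
        then have "s' \<in> A" using s(1) ext_closed unfolding A_def by blast
        then show ?thesis by blast
      next
        case False then show ?thesis by (simp add: lang_Cov del: Cov.simps)
      qed
    qed
    show "lang b (\<lambda>x b. lang b (\<lambda>_ _. {}) (\<sigma> x)) lhs = lang b (\<lambda>x b. lang b (\<lambda>_ _. {}) (\<sigma> x)) rhs"
      using sub unfolding lhs_def rhs_def A_def by (auto simp: lang_Cov simp del: Cov.simps)
  qed
  have "mvalid d lhs rhs"
    using deriv_mvalid[OF compl[rule_format, OF ve] sound depE neq] by blast
  moreover define \<rho> :: "nat \<Rightarrow> bool \<Rightarrow> 'a list set"
    where "\<rho> = (\<lambda>x b. if x = 0 \<and> b then {replicate d a1} else {})"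
  moreover have "validr d \<rho>" by (simp add: \<rho>_def validr_def inD_def)
  ultimately have eq: "lang True \<rho> lhs = lang True \<rho> rhs" unfolding mvalid_def by blast
  have "replicate (Suc d) a1 \<in> lang True \<rho> lhs" by (simp add: lhs_def \<rho>_def)
  moreover have "replicate (Suc d) a1 \<notin> lang True \<rho> rhs"
    by (auto simp: rhs_def \<rho>_def lang_Cov simp del: Cov.simps)
  ultimately show False using eq by simp
qed

end
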